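(* Let $\tau\in\mathscr C^r(\mathbb{S}^1,\mathbb{R})$ and $R>\|\tau'\|_\infty$. If $\widetilde R>0$ satisfies $\vartheta_R-\vartheta_\tau\ge\widetilde R$, then $\widetilde{\mathcal N}_{\widetilde R}(n)\le\mathcal N(\tau,R;n)$ for all $n\ge1$; if $\widetilde R>\vartheta_R+\vartheta_\tau$, then $\mathcal N(\tau,R;n)\le\widetilde{\mathcal N}_{\widetilde R}(n)$ for all $n\ge1$. Consequently, $\mathcal N(\tau)=1$ if and only if $\lim_{n\to\infty}n^{-1}\log\widetilde{\mathcal N}_{\widetilde R}(n)=0$ for every $\widetilde R>0$.
   Context: $\mathbb{S}^1=\mathbb{R}/\mathbb{Z}$, $\mathbb{T}^2=\mathbb{S}^1\times\mathbb{S}^1$, $r\ge2$. $E$ is a $\mathscr C^r$ expanding circle map of degree $\ell\ge2$, $1<\lambda\le E'\le\Lambda$, $0$ a fixed point. $f(x,s)=(E(x),s+\tau(x)\bmod1)$; $\vartheta_\tau=\|\tau'\|_\infty/(\lambda-1)$; for $R>0$, $\vartheta_R=R/(\lambda-1)$ and $\mathscr K_R=\{(\xi,\eta):|\eta|\le\vartheta_R|\xi|\}$; $\mathcal N(\tau,R;n)=\sup_{z\in\mathbb{T}^2}\sup_v\#\{\zeta\in f^{-n}(z):v\in Df^n(\zeta)\mathscr K_R\}$ (sup over unit vectors $v$), and $\mathcal N(\tau)=\lim_n\mathcal N(\tau,R;n)^{1/n}$ (exists, independent of $R>\|\tau'\|_\infty$). Symbolic coding: $\mathcal A=\{0,\dots,\ell-1\}$;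 the points of $E^{-1}(0)$ divide $\mathbb{S}^1$ into half-open intervals $\mathcal I(j)$ each mapped bijectively onto $\mathbb{S}^1$ by $E$; for $\alpha=(\alpha_n,\dots,\alpha_1)\in\mathcal A^n$, $\mathcal I(\alpha)=\bigcap_{i=0}^{n-1}E^{-i}(\mathcal I(\alpha_{n-i}))$, $x_\alpha$ the unique point of $\mathcal I(\alpha)$ with $E^n(x_\alpha)=x$, $[\alpha]_k=(\alpha_k,\dots,\alpha_1)$; for infinite sequences $\alpha=(\dots,\alpha_2,\alpha_1)\in\mathcal A^\infty$ the truncations $[\alpha]_k$ are defined likewise, and a finite word $\alpha\in\mathcal A^n$ is identified with any infinite sequence extending it where needed. $S(x;\alpha)=\sum_{k=1}^\infty\tau'(x_{[\alpha]_k})/(E^k)'(x_{[\alpha]_k})$. For $\widetilde R>0$, $\widetilde{\mathcal N}_{\widetilde R}(n)=\sup_{y\in\mathbb{S}^1,\eta\in\mathbb{R}}\#\{\alpha\in\mathcal A^n: |\eta-S(y;\alpha)|\le\widetilde R\,((E^n)'(y_\alpha))^{-1}\}$, where for $\alpha\in\mathcal A^n$ the value $S(y;\alpha)$ is understood as $S(y;\tilde\alpha)$ for an arbitrary fixed extension $\tilde\alpha\in\mathcal A^\infty$ of $\alpha$. *)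

theory Defs
  imports "HOL-Analysis.Analysis"
begin

text \<open>Circle S^1 = R/Z is represented by [0,1); functions on the circle by 1-periodic
  functions on R (lifts). The expanding map E is given by its lift.\<close>

definition Cr :: "nat \<Rightarrow> (real \<Rightarrow> real) \<Rightarrow> bool" where
  "Cr r g \<longleftrightarrow>
     (\<forall>k<r. \<forall>x. ((deriv ^^ k) g has_real_derivative (deriv ^^ Suc k) g x) (at x))
     \<and> continuous_on UNIV ((deriv ^^ r) g)"

definition circle :: "real set" where "circle = {0..<1}"

definition torus :: "(real \<times> real) set" where "torus = circle \<times> circle"

definition Ec :: "(real \<Rightarrow> real) \<Rightarrow> real \<Rightarrow> real" where
  "Ec E x = frac (E x)"

definition fT :: "(real \<Rightarrow> real) \<Rightarrow> (real \<Rightarrow> real) \<Rightarrow> real \<times> real \<Rightarrow> real \<times> real" where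
  "fT E \<tau> z = (frac (E (fst z)), frac (snd z + \<tau> (fst z)))"

definition Df :: "(real \<Rightarrow> real) \<Rightarrow> (real \<Rightarrow> real) \<Rightarrow> real \<times> real \<Rightarrow> real \<times> real \<Rightarrow> real \<times> real" where
  "Df E \<tau> z w = (deriv E (fst z) * fst w, deriv \<tau> (fst z) * fst w + snd w)"

primrec Dfn :: "(real \<Rightarrow> real) \<Rightarrow> (real \<Rightarrow> real) \<Rightarrow> nat \<Rightarrow> real \<times> real \<Rightarrow> real \<times> real \<Rightarrow> real \<times> real" where
  "Dfn E \<tau> 0 z w = w"
| "Dfn E \<tau> (Suc n) z w = Df E \<tau> ((fT E \<tau> ^^ n) z) (Dfn E \<tau> n z w)"

definition theta :: "real \<Rightarrow> real \<Rightarrow> real" where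
  "theta lam c = c / (lam - 1)"

definition supnorm_deriv :: "(real \<Rightarrow> real) \<Rightarrow> real" where
  "supnorm_deriv \<tau> = Sup (range (\<lambda>x. \<bar>deriv \<tau> x\<bar>))"

definition cone :: "real \<Rightarrow> real \<Rightarrow> (real \<times> real) set" where
  "cone lam R = {w. \<bar>snd w\<bar> \<le> theta lam R * \<bar>fst w\<bar>}"

definition Ncount :: "(real \<Rightarrow> real) \<Rightarrow> (real \<Rightarrow> real) \<Rightarrow> real \<Rightarrow> real \<Rightarrow> nat \<Rightarrow> nat" where
  "Ncount E \<tau> lam R n = Sup {card {\<zeta> \<in> torus. (fT E \<tau> ^^ n) \<zeta> = z \<and> v \<in> Dfn E \<tau> n \<zeta> ` cone lam R}
                            | z v. z \<in> torus \<and> norm v = 1}"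

definition Ntau :: "(real \<Rightarrow> real) \<Rightarrow> (real \<Rightarrow> real) \<Rightarrow> real \<Rightarrow> real \<Rightarrow> real" where
  "Ntau E \<tau> lam R = lim (\<lambda>n. real (Ncount E \<tau> lam R n) powr (1 / real n))"

text \<open>Symbolic coding. I(j) = [p_j, p_(j+1)) where p_j are the preimages of 0 in increasing order.\<close>
definition Iint :: "(real \<Rightarrow> real) \<Rightarrow> nat \<Rightarrow> real set" where
  "Iint E j = {inv E (E 0 + real j) ..< inv E (E 0 + real j + 1)}"

text \<open>I(alpha) for alpha = (alpha_n,...,alpha_1), alpha_i = alpha i\<close>
definition Icyl :: "(real \<Rightarrow> real) \<Rightarrow> (nat \<Rightarrow> nat) \<Rightarrow> nat \<Rightarrow> real set" where
  "Icyl E \<alpha> n = {y \<in> circle. \<forall>i<n. (Ec E ^^ i) y \<in> Iint E (\<alpha> (n - i))}"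

definition xpt :: "(real \<Rightarrow> real) \<Rightarrow> real \<Rightarrow> (nat \<Rightarrow> nat) \<Rightarrow> nat \<Rightarrow> real" where
  "xpt E x \<alpha> n = (THE y. y \<in> Icyl E \<alpha> n \<and> (Ec E ^^ n) y = x)"

definition Sfun :: "(real \<Rightarrow> real) \<Rightarrow> (real \<Rightarrow> real) \<Rightarrow> real \<Rightarrow> (nat \<Rightarrow> nat) \<Rightarrow> real" where
  "Sfun E \<tau> x \<alpha> = (\<Sum>k. deriv \<tau> (xpt E x \<alpha> (Suc k)) / deriv (E ^^ Suc k) (xpt E x \<alpha> (Suc k)))"

definition words :: "nat \<Rightarrow> nat \<Rightarrow> (nat \<Rightarrow> nat) set" where
  "words l n = PiE {1..n} (\<lambda>_. {..<l})"

definition seqs :: "nat \<Rightarrow> (nat \<Rightarrow> nat) set" where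
  "seqs l = {\<alpha>. \<forall>i\<ge>1. \<alpha> i < l}"

text \<open>a fixed choice of extensions of finite words to infinite sequences\<close>
definition valid_ext :: "nat \<Rightarrow> (nat \<Rightarrow> (nat \<Rightarrow> nat) \<Rightarrow> (nat \<Rightarrow> nat)) \<Rightarrow> bool" where
  "valid_ext l ext \<longleftrightarrow>
     (\<forall>n \<alpha>. \<alpha> \<in> words l n \<longrightarrow> ext n \<alpha> \<in> seqs l \<and> (\<forall>i\<in>{1..n}. ext n \<alpha> i = \<alpha> i))"

definition Ntilde :: "(real \<Rightarrow> real) \<Rightarrow> (real \<Rightarrow> real) \<Rightarrow> nat \<Rightarrow> (nat \<Rightarrow> (nat \<Rightarrow> nat) \<Rightarrow> (nat \<Rightarrow> nat))
                      \<Rightarrow> real \<Rightarrow> nat \<Rightarrow> nat" where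
  "Ntilde E \<tau> l ext Rt n = Sup {card {\<alpha> \<in> words l n.
        \<bar>\<eta> - Sfun E \<tau> y (ext n \<alpha>)\<bar> \<le> Rt / deriv (E ^^ n) (xpt E y \<alpha> n)} | y \<eta>. y \<in> circle}"

end

theory Submission
  imports Defs
begin



locale skew =
  fixes E \<tau> :: "real \<Rightarrow> real" and l :: nat and lam :: real
  assumes l2: "l \<ge> 2"
    and Ed: "\<And>x. (E has_real_derivative deriv E x) (at x)"
    and td: "\<And>x. (\<tau> has_real_derivative deriv \<tau> x) (at x)"
    and tdc: "continuous_on UNIV (deriv \<tau>)"
    and Eper: "\<And>x. E (x + 1) = E x + real l"
    and lam1: "1 < lam" and lamE: "\<And>x. lam \<le> deriv E x"
    and E0: "E 0 \<in> \<int>"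
    and tper: "\<And>x. \<tau> (x + 1) = \<tau> x"
begin

definition "M = supnorm_deriv \<tau>"

lemma Eint_nat: "E (x + real k) = E x + real l * real k"
proof (induction k arbitrary: x)
  case 0 then show ?case by simp
next
  case (Suc k)
  have "E (x + real (Suc k)) = E ((x + real k) + 1)" by (simp add: algebra_simps)
  also have "\<dots> = E x + real l * real k + real l" using Eper Suc by simp
  finally show ?case by (simp add: algebra_simps)
qed

lemma Eint: "E (x + of_int k) = E x + real l * of_int k"
proof (cases "k \<ge> 0")
  case True
  then obtain n where "k = int n" by (metis nonneg_eq_int)
  then show ?thesis using Eint_nat by simp
next
  case False
  then have "- k \<ge> 0" by simp
    then obtain n where "- k = int n" by (metis nonneg_eq_int)
    then have n: "k = - int n" by simp
  have "E ((x - real n) + real n) = E (x - real n) + real l * real n" by (rule Eint_nat)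
  then show ?thesis using n by simp
qed

lemma Econt: "continuous_on UNIV E"
  using Ed by (meson DERIV_isCont continuous_at_imp_continuous_on)

lemma dE_pos: "0 < deriv E x" using lamE[of x] lam1 by linarith

lemma Emono: "x < y \<Longrightarrow> E x < E y"
  by (rule DERIV_pos_imp_increasing) (use Ed dE_pos in blast)+

lemma Einj: "inj E"
  by (metis Emono linorder_injI order_less_irrefl)

lemma Emono_le: "x \<le> y \<longleftrightarrow> E x \<le> E y"
  by (metis Emono linorder_not_le order_le_less)

lemma Emono_less: "x < y \<longleftrightarrow> E x < E y"
  by (metis Emono linorder_not_le order_le_less)

lemma deriv_shift:
  fixes g :: "real \<Rightarrow> real"
  assumes "\<And>x. g (x + 1) = g x + c" and "\<And>x. (g has_real_derivative deriv g x) (at x)"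
  shows "deriv g (x + 1) = deriv g x"
proof -
  have 1: "((\<lambda>x. g (x + 1)) has_real_derivative deriv g (x + 1) * 1) (at x)"
    by (rule DERIV_chain2[OF assms(2)]) (auto intro!: derivative_eq_intros)
  have 2: "((\<lambda>x. g x + c) has_real_derivative deriv g x + 0) (at x)"
    by (rule DERIV_add[OF assms(2)]) simp
  from DERIV_unique[OF 1] 2 show ?thesis unfolding assms(1) by simp
qed

lemma dE_per1: "deriv E (x + 1) = deriv E x"
  by (rule deriv_shift[OF Eper Ed])

lemma dt_per1: "deriv \<tau> (x + 1) = deriv \<tau> x"
  by (rule deriv_shift[of \<tau> 0]) (auto simp: tper td)

lemma per_int:
  fixes g :: "real \<Rightarrow> 'a"
  assumes "\<And>x. g (x + 1) = g x"
  shows "g (x + of_int k) = g x"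
proof -
  have nat: "g (y + real n) = g y" for y n
    by (induction n arbitrary: y) (auto simp: assms add.assoc[symmetric])
  show ?thesis
  proof (cases "k \<ge> 0")
    case True
    then obtain n where "k = int n" by (metis nonneg_eq_int)
    then show ?thesis using nat by simp
  next
    case False
    then have "- k \<ge> 0" by simp
    then obtain n where "- k = int n" by (metis nonneg_eq_int)
    then have n: "k = - int n" by simp
    have "g ((x - real n) + real n) = g (x - real n)" by (rule nat)
    then show ?thesis using n by simp
  qed
qed

lemma dE_int: "deriv E (x + of_int k) = deriv E x"
  by (rule per_int) (rule dE_per1)

lemma dt_int: "deriv \<tau> (x + of_int k) = deriv \<tau> x"
  by (rule per_int) (rule dt_per1)

lemma dt_frac: "deriv \<tau> (frac x) = deriv \<tau> x"
  using dt_int[of "frac x" "\<lfloor>x\<rfloor>"] by (simp add: frac_def)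

lemma dE_frac: "deriv E (frac x) = deriv E x"
  using dE_int[of "frac x" "\<lfloor>x\<rfloor>"] by (simp add: frac_def)

lemma dt_bdd: "bdd_above (range (\<lambda>x. \<bar>deriv \<tau> x\<bar>))"
proof -
  have "compact (deriv \<tau> ` {0..1})"
    by (rule compact_continuous_image) (auto intro: continuous_on_subset[OF tdc])
  then have "bounded (deriv \<tau> ` {0..1})" by (rule compact_imp_bounded)
  then obtain B where B: "\<forall>y\<in>deriv \<tau> ` {0..1}. norm y \<le> B" unfolding bounded_iff by blast
  have "\<bar>deriv \<tau> x\<bar> \<le> B" for x
  proof -
    have "frac x \<in> {0..1}" using frac_lt_1[of x] frac_ge_0[of x] by simp
    then have "norm (deriv \<tau> (frac x)) \<le> B" using B by blast
    then show ?thesis by (simp add: dt_frac)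
  qed
  then show ?thesis by (intro bdd_aboveI[of _ B]) auto
qed

lemma dt_le: "\<bar>deriv \<tau> x\<bar> \<le> M"
  unfolding M_def supnorm_deriv_def by (rule cSup_upper[OF _ dt_bdd]) auto

lemma M_nonneg: "0 \<le> M"
  using dt_le[of 0] by linarith

lemma lam_pos: "0 < lam" using lam1 by simp
end



context skew begin

lemma Ec_circle: "Ec E x \<in> circle"
  by (simp add: Ec_def circle_def frac_lt_1)

lemma frac_E_shift: "frac (E (x + of_int k)) = frac (E x)"
proof -
  have "real l * of_int k \<in> \<int>" by (intro Ints_mult) auto
  then show ?thesis by (simp add: Eint frac_add_int_right)
qed

lemma Ec_frac: "Ec E (frac x) = Ec E x"
  using frac_E_shift[of "frac x" "\<lfloor>x\<rfloor>"] by (simp add: Ec_def frac_def)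

lemma Ec_iter: "(Ec E ^^ Suc i) y = frac ((E ^^ Suc i) y)"
proof (induction i)
  case 0 then show ?case by (simp add: Ec_def)
next
  case (Suc i)
  have "(Ec E ^^ Suc (Suc i)) y = Ec E ((Ec E ^^ Suc i) y)" by simp
  also have "\<dots> = Ec E ((E ^^ Suc i) y)" using Suc Ec_frac by simp
  also have "\<dots> = frac ((E ^^ Suc (Suc i)) y)" by (simp add: Ec_def)
  finally show ?case .
qed

lemma dE_Ec: "deriv E ((Ec E ^^ i) y) = deriv E ((E ^^ i) y)"
proof (cases i)
  case 0 then show ?thesis by simp
next
  case (Suc j) then show ?thesis using Ec_iter dE_frac by simp
qed

lemma dt_Ec: "deriv \<tau> ((Ec E ^^ i) y) = deriv \<tau> ((E ^^ i) y)"
proof (cases i)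
  case 0 then show ?thesis by simp
next
  case (Suc j) then show ?thesis using Ec_iter dt_frac by simp
qed

lemma Ec_iter_circle: "y \<in> circle \<Longrightarrow> (Ec E ^^ i) y \<in> circle"
  by (cases i) (auto simp: Ec_circle)

lemma Ec_iter_add: "(Ec E ^^ (a + b)) y = (Ec E ^^ b) ((Ec E ^^ a) y)"
  by (simp add: funpow_add add.commute[of a b])

definition P :: "nat \<Rightarrow> real \<Rightarrow> real" where
  "P n y = (\<Prod>i<n. deriv E ((Ec E ^^ i) y))"

lemma En_deriv: "((E ^^ n) has_real_derivative P n y) (at y)"
proof (induction n)
  case 0 then show ?case by (simp add: P_def DERIV_ident[unfolded id_def] id_def)
next
  case (Suc n)
  have "((\<lambda>x. E ((E ^^ n) x)) has_real_derivative deriv E ((E ^^ n) y) * P n y) (at y)"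
    by (rule DERIV_chain2[OF Ed Suc])
  moreover have "deriv E ((E ^^ n) y) * P n y = P (Suc n) y"
    by (simp add: P_def dE_Ec)
  ultimately show ?case by (simp add: o_def)
qed

lemma deriv_En: "deriv (E ^^ n) y = P n y"
  using En_deriv by (rule DERIV_imp_deriv)

lemma P_ge: "lam ^ n \<le> P n y"
proof -
  have "(\<Prod>i<n. lam) \<le> (\<Prod>i<n. deriv E ((Ec E ^^ i) y))"
    by (rule prod_mono) (use lamE lam_pos in \<open>auto intro: less_imp_le\<close>)
  then show ?thesis by (simp add: P_def)
qed

lemma P_pos: "0 < P n y"
  using P_ge[of n y] lam_pos by (meson less_le_trans zero_less_power)

lemma P_add: "P (a + b) y = P a y * P b ((Ec E ^^ a) y)"
proof (induction b)
  case 0 then show ?case by (simp add: P_def)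
next
  case (Suc b)
  have "P (a + Suc b) y = P (a + b) y * deriv E ((Ec E ^^ (a + b)) y)"
    by (simp add: P_def)
  also have "\<dots> = P a y * (P b ((Ec E ^^ a) y) * deriv E ((Ec E ^^ b) ((Ec E ^^ a) y)))"
    using Suc by (simp add: Ec_iter_add)
  also have "\<dots> = P a y * P (Suc b) ((Ec E ^^ a) y)" by (simp add: P_def)
  finally show ?case .
qed

lemma P_Suc: "P (Suc n) y = P n y * deriv E ((Ec E ^^ n) y)"
  by (simp add: P_def)

end



context skew begin

lemma E1: "E 1 = E 0 + real l" using Eper[of 0] by simp

lemma Ehit: assumes "E 0 \<le> c" "c \<le> E 1" shows "\<exists>y. 0 \<le> y \<and> y \<le> 1 \<and> E y = c"
  using IVT'[of E 0 c 1] assms continuous_on_subset[OF Econt] by auto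

lemma invE: "inv E (E y) = y" by (rule inv_f_f[OF Einj])

lemma Iint_char:
  assumes "j < l"
  shows "y \<in> Iint E j \<longleftrightarrow> E 0 + real j \<le> E y \<and> E y < E 0 + real j + 1"
proof -
  obtain a where a: "E a = E 0 + real j" using Ehit[of "E 0 + real j"] assms E1 by auto
  obtain b where b: "E b = E 0 + real j + 1" using Ehit[of "E 0 + real j + 1"] assms E1 by auto
  have "Iint E j = {a..<b}" unfolding Iint_def using a b invE by metis
  then show ?thesis using a b Emono_le[of a y] Emono_less[of y b] by auto
qed

definition itin :: "real \<Rightarrow> nat" where "itin y = nat \<lfloor>E y - E 0\<rfloor>"

lemma Iint_circle: assumes "j < l" "y \<in> Iint E j" shows "y \<in> circle"
proof -
  have "E 0 \<le> E y" "E y < E 1" using assms Iint_char[of j y] E1 by auto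
  then show ?thesis unfolding circle_def using Emono_le Emono_less by auto
qed

lemma Ec_Iint: assumes "j < l" "y \<in> Iint E j" shows "Ec E y = E y - E 0 - real j"
proof -
  have "E y - (E y - E 0 - real j) = E 0 + real j" by simp
  also have "\<dots> \<in> \<int>" using E0 by simp
  finally show ?thesis unfolding Ec_def frac_unique_iff using assms Iint_char[of j y] by auto
qed

lemma itin_Iint: assumes "j < l" "y \<in> Iint E j" shows "itin y = j"
proof -
  obtain z where z: "E 0 = of_int z" using E0 Ints_cases by auto
  have "\<lfloor>E y - E 0\<rfloor> = int j"
    by (rule floor_unique) (use assms Iint_char[of j y] in auto)
  then show ?thesis unfolding itin_def by simp
qed

lemma itin_circle: assumes "y \<in> circle" shows "itin y < l" "y \<in> Iint E (itin y)"
proof -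
  have y: "0 \<le> y" "y < 1" using assms by (auto simp: circle_def)
  have e: "E 0 \<le> E y" "E y < E 0 + real l" using y Emono_le[of 0 y] Emono_less[of y 1] E1 by auto
  define k where "k = \<lfloor>E y - E 0\<rfloor>"
  have k0: "0 \<le> k" using e unfolding k_def by simp
  have k1: "of_int k \<le> E y - E 0" "E y - E 0 < of_int k + 1" unfolding k_def by linarith+
  have "k < int l" using k1 e by linarith
  then show "itin y < l" using k0 nat_less_iff unfolding itin_def k_def by blast
  have "real (itin y) = of_int k" using k0 unfolding itin_def k_def by simp
  then show "y \<in> Iint E (itin y)" using Iint_char[OF \<open>itin y < l\<close>] k1 by auto
qed

lemma Iint_ex: assumes "j < l" "x \<in> circle" shows "\<exists>y. y \<in> Iint E j \<and> Ec E y = x"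
proof -
  have x: "0 \<le> x" "x < 1" using assms by (auto simp: circle_def)
  obtain y where y: "E y = E 0 + real j + x"
    using Ehit[of "E 0 + real j + x"] x assms E1 by auto
  have yI: "y \<in> Iint E j" using Iint_char[OF assms(1)] y x by auto
  show ?thesis using yI Ec_Iint[OF assms(1) yI] y by auto
qed

lemma Iint_inj: assumes "j < l" "y1 \<in> Iint E j" "y2 \<in> Iint E j" "Ec E y1 = Ec E y2"
  shows "y1 = y2"
proof -
  have "E y1 = E y2" using assms Ec_Iint[OF assms(1)] by force
  then show ?thesis using Einj by (simp add: inj_eq)
qed

lemma Icyl_0: "Icyl E \<alpha> 0 = circle"
  by (simp add: Icyl_def)

lemma Icyl_circle: "y \<in> Icyl E \<alpha> n \<Longrightarrow> y \<in> circle"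
  by (simp add: Icyl_def)

lemma all_Suc_split: "(\<forall>i<Suc n. Q i) = (Q 0 \<and> (\<forall>i<n. Q (Suc i)))"
  by (auto simp: less_Suc_eq_0_disj)

lemma Icyl_Suc: "y \<in> Icyl E \<alpha> (Suc n) \<longleftrightarrow> y \<in> circle \<and> y \<in> Iint E (\<alpha> (Suc n)) \<and> Ec E y \<in> Icyl E \<alpha> n"
proof -
  have "(\<forall>i<Suc n. (Ec E ^^ i) y \<in> Iint E (\<alpha> (Suc n - i))) \<longleftrightarrow>
        y \<in> Iint E (\<alpha> (Suc n)) \<and> (\<forall>i<n. (Ec E ^^ i) (Ec E y) \<in> Iint E (\<alpha> (n - i)))"
    unfolding all_Suc_split by (simp add: funpow_Suc_right del: funpow.simps)
  then show ?thesis using Ec_circle unfolding Icyl_def by auto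
qed

definition okw :: "(nat \<Rightarrow> nat) \<Rightarrow> nat \<Rightarrow> bool" where
  "okw \<alpha> n \<longleftrightarrow> (\<forall>i\<in>{1..n}. \<alpha> i < l)"

lemma cyl_ex1: "okw \<alpha> n \<Longrightarrow> x \<in> circle \<Longrightarrow> \<exists>!y. y \<in> Icyl E \<alpha> n \<and> (Ec E ^^ n) y = x"
proof (induction n arbitrary: x)
  case 0 then show ?case by (simp add: Icyl_0) blast
next
  case (Suc n)
  have ok: "okw \<alpha> n" "\<alpha> (Suc n) < l" using Suc.prems by (auto simp: okw_def)
  obtain u where u: "u \<in> Icyl E \<alpha> n" "(Ec E ^^ n) u = x"
    and uu: "\<And>u'. u' \<in> Icyl E \<alpha> n \<Longrightarrow> (Ec E ^^ n) u' = x \<Longrightarrow> u' = u"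
    using Suc.IH[OF ok(1) Suc.prems(2)] by blast
  obtain y where y: "y \<in> Iint E (\<alpha> (Suc n))" "Ec E y = u"
    using Iint_ex[OF ok(2) Icyl_circle[OF u(1)]] by blast
  show ?case
  proof (rule ex1I[of _ y])
    show "y \<in> Icyl E \<alpha> (Suc n) \<and> (Ec E ^^ Suc n) y = x"
      using y u Iint_circle[OF ok(2) y(1)] by (simp add: Icyl_Suc funpow_Suc_right del: funpow.simps)
  next
    fix y' assume y': "y' \<in> Icyl E \<alpha> (Suc n) \<and> (Ec E ^^ Suc n) y' = x"
    then have "Ec E y' = u" using uu by (simp add: Icyl_Suc funpow_Suc_right del: funpow.simps)
    then show "y' = y" using Iint_inj[OF ok(2)] y y' by (auto simp: Icyl_Suc)
  qed
qed

lemma xpt: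
  assumes "okw \<alpha> n" "x \<in> circle"
  shows "xpt E x \<alpha> n \<in> Icyl E \<alpha> n" "(Ec E ^^ n) (xpt E x \<alpha> n) = x"
  using theI'[OF cyl_ex1[OF assms]] unfolding xpt_def by auto

lemma xpt_unique:
  assumes "okw \<alpha> n" "y \<in> Icyl E \<alpha> n" "(Ec E ^^ n) y = x"
  shows "xpt E x \<alpha> n = y"
proof -
  have "x \<in> circle" using assms Ec_iter_circle Icyl_circle by blast
  then show ?thesis unfolding xpt_def using the1_equality[OF cyl_ex1[OF assms(1)]] assms by blast
qed

lemma Icyl_cong: "(\<And>i. i \<in> {1..n} \<Longrightarrow> \<alpha> i = \<beta> i) \<Longrightarrow> Icyl E \<alpha> n = Icyl E \<beta> n"
  unfolding Icyl_def by (auto simp: Suc_le_eq) 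

lemma xpt_cong: "(\<And>i. i \<in> {1..n} \<Longrightarrow> \<alpha> i = \<beta> i) \<Longrightarrow> xpt E x \<alpha> n = xpt E x \<beta> n"
  unfolding xpt_def using Icyl_cong by metis

lemma Icyl_shift: assumes "y \<in> Icyl E \<alpha> (n + k)" shows "(Ec E ^^ k) y \<in> Icyl E \<alpha> n"
proof -
  have y: "y \<in> circle" "\<forall>i<n+k. (Ec E ^^ i) y \<in> Iint E (\<alpha> (n + k - i))"
    using assms unfolding Icyl_def by auto
  have "(Ec E ^^ i) ((Ec E ^^ k) y) \<in> Iint E (\<alpha> (n - i))" if "i < n" for i
    using y(2)[rule_format, of "i + k"] that by (simp add: Ec_iter_add[symmetric] add.commute)
  then show ?thesis unfolding Icyl_def using y(1) Ec_iter_circle by auto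
qed

lemma xpt_shift:
  assumes "okw \<alpha> (n + k)" "x \<in> circle"
  shows "(Ec E ^^ k) (xpt E x \<alpha> (n + k)) = xpt E x \<alpha> n"
proof -
  have ok: "okw \<alpha> n" using assms(1) by (auto simp: okw_def)
  note X = xpt[OF assms]
  show ?thesis
  proof (rule xpt_unique[OF ok, symmetric])
    show "(Ec E ^^ k) (xpt E x \<alpha> (n + k)) \<in> Icyl E \<alpha> n" using Icyl_shift X(1) .
    show "(Ec E ^^ n) ((Ec E ^^ k) (xpt E x \<alpha> (n + k))) = x"
      using X(2) by (simp add: Ec_iter_add[symmetric] add.commute)
  qed
qed

definition wd :: "nat \<Rightarrow> real \<Rightarrow> (nat \<Rightarrow> nat)" where
  "wd n y = (\<lambda>i. if i \<in> {1..n} then itin ((Ec E ^^ (n - i)) y) else undefined)"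

lemma wd_words: "y \<in> circle \<Longrightarrow> wd n y \<in> words l n"
  unfolding words_def wd_def using itin_circle(1) Ec_iter_circle by (auto simp: PiE_def extensional_def)

lemma wd_Icyl: assumes "y \<in> circle" shows "y \<in> Icyl E (wd n y) n"
  unfolding Icyl_def
proof (intro CollectI conjI allI impI assms)
  fix i assume i: "i < n"
  then have "n - i \<in> {1..n}" "n - (n - i) = i" by auto
  then have "wd n y (n - i) = itin ((Ec E ^^ i) y)" unfolding wd_def by simp
  then show "(Ec E ^^ i) y \<in> Iint E (wd n y (n - i))"
    using itin_circle(2)[OF Ec_iter_circle[OF assms]] by simp
qed

lemma words_okw: "\<alpha> \<in> words l n \<Longrightarrow> okw \<alpha> n"
  by (auto simp: words_def okw_def)

lemma Icyl_wd: assumes "\<alpha> \<in> words l n" "y \<in> Icyl E \<alpha> n" shows "\<alpha> = wd n y"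
proof
  fix i show "\<alpha> i = wd n y i"
  proof (cases "i \<in> {1..n}")
    case True
    then have lt: "\<alpha> i < l" using assms(1) by (auto simp: words_def)
    have "n - i < n" "n - (n - i) = i" using True by auto
    have "\<forall>j<n. (Ec E ^^ j) y \<in> Iint E (\<alpha> (n - j))" using assms(2) by (simp add: Icyl_def)
    then have "(Ec E ^^ (n - i)) y \<in> Iint E (\<alpha> (n - (n - i)))" using \<open>n - i < n\<close> by blast
    then have "(Ec E ^^ (n - i)) y \<in> Iint E (\<alpha> i)" using \<open>n - (n - i) = i\<close> by simp
    then show ?thesis using itin_Iint[OF lt] True by (simp add: wd_def)
  next
    case False then show ?thesis using assms(1) by (auto simp: words_def wd_def PiE_def extensional_def)
  qed
qed

end



context skew begin

definition T :: "nat \<Rightarrow> real \<Rightarrow> real" where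
  "T n y = (\<Sum>k<n. deriv \<tau> ((Ec E ^^ k) y) * P k y)"

definition Sn :: "nat \<Rightarrow> real \<Rightarrow> real" where
  "Sn n y = T n y / P n y"

lemma geo_tail: "(\<lambda>k. A / lam ^ Suc k) sums (A / (lam - 1))"
proof -
  have q: "norm (1 / lam) < 1" using lam1 by simp
  have "(\<lambda>k. (A / lam) * (1 / lam) ^ k) sums ((A / lam) * (1 / (1 - 1 / lam)))"
    by (rule sums_mult[OF geometric_sums[OF q]])
  moreover have "(A / lam) * (1 / (1 - 1 / lam)) = A / (lam - 1)" using lam1 by (simp add: field_simps)
  moreover have "(\<lambda>k. (A / lam) * (1 / lam) ^ k) = (\<lambda>k. A / lam ^ Suc k)"
    by (simp add: power_one_over)
  ultimately show ?thesis by metis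
qed

lemma seq_okw: "\<forall>i\<ge>1. \<alpha> i < l \<Longrightarrow> okw \<alpha> n"
  by (auto simp: okw_def)

lemma xpt0: "x \<in> circle \<Longrightarrow> xpt E x \<alpha> 0 = x"
  by (rule xpt_unique) (auto simp: okw_def Icyl_0)

lemma P0: "P 0 y = 1" by (simp add: P_def)

lemma term_bound:
  assumes \<alpha>: "\<forall>i\<ge>1. \<alpha> i < l" and x: "x \<in> circle"
  shows "\<bar>deriv \<tau> (xpt E x \<alpha> (n + Suc k)) / deriv (E ^^ (n + Suc k)) (xpt E x \<alpha> (n + Suc k))\<bar>
         \<le> M / P n (xpt E x \<alpha> n) / lam ^ Suc k"
proof -
  define z where "z = xpt E x \<alpha> (n + Suc k)"
  have sh: "(Ec E ^^ Suc k) z = xpt E x \<alpha> n"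
    unfolding z_def by (rule xpt_shift[OF seq_okw[OF \<alpha>] x])
  have "deriv (E ^^ (n + Suc k)) z = P (n + Suc k) z" by (rule deriv_En)
  also have "\<dots> = P (Suc k + n) z" by (simp only: add.commute)
  also have "\<dots> = P (Suc k) z * P n ((Ec E ^^ Suc k) z)" by (rule P_add)
  finally have D: "deriv (E ^^ (n + Suc k)) z = P (Suc k) z * P n (xpt E x \<alpha> n)" by (simp only: sh)
  have pos: "0 < lam ^ Suc k * P n (xpt E x \<alpha> n)" using lam_pos P_pos by simp
  have le: "lam ^ Suc k * P n (xpt E x \<alpha> n) \<le> P (Suc k) z * P n (xpt E x \<alpha> n)"
    by (rule mult_right_mono[OF P_ge]) (simp add: P_pos less_imp_le)
  have "\<bar>deriv \<tau> z / deriv (E ^^ (n + Suc k)) z\<bar> = \<bar>deriv \<tau> z\<bar> / (P (Suc k) z * P n (xpt E x \<alpha> n))"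
    unfolding D using P_pos[of "Suc k" z] P_pos[of n "xpt E x \<alpha> n"] by (simp add: abs_mult)
  also have "\<dots> \<le> M / (lam ^ Suc k * P n (xpt E x \<alpha> n))"
    by (rule frac_le[OF M_nonneg dt_le pos le])
  also have "\<dots> = M / P n (xpt E x \<alpha> n) / lam ^ Suc k" by (simp add: divide_divide_eq_left mult.commute)
  finally show ?thesis unfolding z_def .
qed

lemma head_sum:
  assumes \<alpha>: "okw \<alpha> n" and x: "x \<in> circle"
  shows "(\<Sum>i<n. deriv \<tau> (xpt E x \<alpha> (Suc i)) / deriv (E ^^ Suc i) (xpt E x \<alpha> (Suc i)))
        = Sn n (xpt E x \<alpha> n)"
proof -
  define z where "z = xpt E x \<alpha> n"
  have eq: "deriv \<tau> (xpt E x \<alpha> (Suc i)) / deriv (E ^^ Suc i) (xpt E x \<alpha> (Suc i))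
     = deriv \<tau> ((Ec E ^^ (n - Suc i)) z) * P (n - Suc i) z / P n z" if i: "i < n" for i
  proof -
    have nn: "Suc i + (n - Suc i) = n" "(n - Suc i) + Suc i = n" using i by auto
    have ok: "okw \<alpha> (Suc i + (n - Suc i))" using nn \<alpha> by simp
    have w: "(Ec E ^^ (n - Suc i)) z = xpt E x \<alpha> (Suc i)"
      using xpt_shift[OF ok x] nn unfolding z_def by simp
    have Pn: "P n z = P (n - Suc i) z * P (Suc i) ((Ec E ^^ (n - Suc i)) z)"
      using P_add[of "n - Suc i" "Suc i" z] nn by simp
    show ?thesis unfolding w[symmetric] deriv_En Pn using P_pos[of "n - Suc i" z]
      by (simp add: field_simps)
  qed
  have "(\<Sum>i<n. deriv \<tau> (xpt E x \<alpha> (Suc i)) / deriv (E ^^ Suc i) (xpt E x \<alpha> (Suc i)))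
      = (\<Sum>i<n. deriv \<tau> ((Ec E ^^ (n - Suc i)) z) * P (n - Suc i) z / P n z)"
    by (rule sum.cong[OF refl], rule eq) simp
  also have "\<dots> = (\<Sum>i<n. deriv \<tau> ((Ec E ^^ i) z) * P i z / P n z)"
    by (rule sum.nat_diff_reindex)
  also have "\<dots> = Sn n z" unfolding Sn_def T_def by (simp add: sum_divide_distrib)
  finally show ?thesis unfolding z_def .
qed

lemma Sfun_approx:
  assumes \<alpha>: "\<forall>i\<ge>1. \<alpha> i < l" and x: "x \<in> circle"
  shows "\<bar>Sfun E \<tau> x \<alpha> - Sn n (xpt E x \<alpha> n)\<bar> \<le> theta lam M / P n (xpt E x \<alpha> n)"
proof -
  define f where "f k = deriv \<tau> (xpt E x \<alpha> (Suc k)) / deriv (E ^^ Suc k) (xpt E x \<alpha> (Suc k))" for k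
  define A where "A = M / P n (xpt E x \<alpha> n)"
  have S: "Sfun E \<tau> x \<alpha> = suminf f" unfolding Sfun_def f_def ..
  have b0: "norm (f k) \<le> M / lam ^ Suc k" for k
    using term_bound[OF \<alpha> x, of 0 k] unfolding f_def by (simp add: xpt0[OF x] P0 del: funpow.simps)
  have sf: "summable f"
    by (rule summable_comparison_test'[OF sums_summable[OF geo_tail[of M]] b0])
  have bn: "norm \<bar>f (k + n)\<bar> \<le> A / lam ^ Suc k" for k
    using term_bound[OF \<alpha> x, of n k] unfolding f_def A_def by (simp add: add.commute del: funpow.simps)
  have sg: "summable (\<lambda>k. A / lam ^ Suc k)" by (rule sums_summable[OF geo_tail])
  have sa: "summable (\<lambda>k. \<bar>f (k + n)\<bar>)" by (rule summable_comparison_test'[OF sg bn])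
  have "\<bar>(\<Sum>k. f (k + n))\<bar> \<le> (\<Sum>k. \<bar>f (k + n)\<bar>)" by (rule summable_rabs[OF sa])
  also have "\<dots> \<le> (\<Sum>k. A / lam ^ Suc k)"
    by (rule suminf_le[OF _ sa sg]) (use bn in simp)
  also have "\<dots> = A / (lam - 1)" using geo_tail sums_unique by metis
  finally have tail: "\<bar>(\<Sum>k. f (k + n))\<bar> \<le> A / (lam - 1)" .
  have "suminf f = (\<Sum>k. f (k + n)) + (\<Sum>i<n. f i)" by (rule suminf_split_initial_segment[OF sf])
  moreover have "(\<Sum>i<n. f i) = Sn n (xpt E x \<alpha> n)"
    unfolding f_def by (rule head_sum[OF seq_okw[OF \<alpha>] x])
  moreover have "A / (lam - 1) = theta lam M / P n (xpt E x \<alpha> n)"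
    unfolding A_def theta_def by simp
  ultimately show ?thesis using S tail by simp
qed

lemma fT_fst: "fst ((fT E \<tau> ^^ n) z) = (Ec E ^^ n) (fst z)"
  by (induction n) (auto simp: fT_def Ec_def)

lemma fT_snd: "snd z \<in> circle \<Longrightarrow>
   snd ((fT E \<tau> ^^ n) z) = frac (snd z + (\<Sum>i<n. \<tau> ((Ec E ^^ i) (fst z))))"
proof (induction n)
  case 0 then show ?case by (simp add: circle_def)
next
  case (Suc n)
  have "snd ((fT E \<tau> ^^ Suc n) z) = frac (snd ((fT E \<tau> ^^ n) z) + \<tau> (fst ((fT E \<tau> ^^ n) z)))"
    by (simp add: fT_def)
  also have "\<dots> = frac (snd z + (\<Sum>i<Suc n. \<tau> ((Ec E ^^ i) (fst z))))"
    using Suc by (simp add: fT_fst add.assoc)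
  finally show ?case .
qed

lemma fT_pair: "snd z \<in> circle \<Longrightarrow>
   (fT E \<tau> ^^ n) z = ((Ec E ^^ n) (fst z), frac (snd z + (\<Sum>i<n. \<tau> ((Ec E ^^ i) (fst z)))))"
  using fT_fst fT_snd by (metis prod.collapse)

lemma Dfn_form: "Dfn E \<tau> n z w = (P n (fst z) * fst w, snd w + T n (fst z) * fst w)"
proof (induction n)
  case 0 then show ?case by (simp add: P_def T_def)
next
  case (Suc n)
  show ?case by (simp add: Suc Df_def fT_fst P_Suc T_def algebra_simps)
qed

end



context skew begin

definition cs :: "nat \<Rightarrow> real \<Rightarrow> real" where
  "cs n y = (\<Sum>i<n. \<tau> ((Ec E ^^ i) y))"

definition Pre :: "real \<Rightarrow> nat \<Rightarrow> real \<times> real \<Rightarrow> real \<times> real \<Rightarrow> (real \<times> real) set" where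
  "Pre R n z v = {\<zeta> \<in> torus. (fT E \<tau> ^^ n) \<zeta> = z \<and> v \<in> Dfn E \<tau> n \<zeta> ` cone lam R}"

definition PreAll :: "nat \<Rightarrow> real \<times> real \<Rightarrow> (real \<times> real) set" where
  "PreAll n z = {\<zeta> \<in> torus. (fT E \<tau> ^^ n) \<zeta> = z}"

lemma Ncount_eq: "Ncount E \<tau> lam R n = Sup {card (Pre R n z v) | z v. z \<in> torus \<and> norm v = 1}"
  by (simp add: Ncount_def Pre_def)

lemma finite_words: "finite (words l n)"
  by (simp add: words_def finite_PiE)

lemma torus_iff: "z \<in> torus \<longleftrightarrow> fst z \<in> circle \<and> snd z \<in> circle"
  by (cases z) (simp add: torus_def)

lemma fT_pair': "snd \<zeta> \<in> circle \<Longrightarrow>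
   (fT E \<tau> ^^ n) \<zeta> = ((Ec E ^^ n) (fst \<zeta>), frac (snd \<zeta> + cs n (fst \<zeta>)))"
  unfolding cs_def by (rule fT_pair)

lemma pre_det:
  assumes "\<zeta> \<in> torus" "(fT E \<tau> ^^ n) \<zeta> = z"
  shows "fst \<zeta> = xpt E (fst z) (wd n (fst \<zeta>)) n" "snd \<zeta> = frac (snd z + - cs n (fst \<zeta>))"
    "(Ec E ^^ n) (fst \<zeta>) = fst z"
proof -
  have c: "fst \<zeta> \<in> circle" "snd \<zeta> \<in> circle" using assms(1) torus_iff by auto
  have z: "z = ((Ec E ^^ n) (fst \<zeta>), frac (snd \<zeta> + cs n (fst \<zeta>)))"
    using fT_pair'[OF c(2)] assms(2) by simp
  show "(Ec E ^^ n) (fst \<zeta>) = fst z" using z by simp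
  show "fst \<zeta> = xpt E (fst z) (wd n (fst \<zeta>)) n"
    using xpt_unique[OF words_okw[OF wd_words[OF c(1)]] wd_Icyl[OF c(1)]] z by simp
  have "frac (snd z + - cs n (fst \<zeta>)) = frac (snd \<zeta> + cs n (fst \<zeta>) + - cs n (fst \<zeta>))"
    using z frac_add_simps(1)[of "snd \<zeta> + cs n (fst \<zeta>)" "- cs n (fst \<zeta>)"] by simp
  also have "\<dots> = snd \<zeta>" using c(2) by (simp add: circle_def)
  finally show "snd \<zeta> = frac (snd z + - cs n (fst \<zeta>))" by simp
qed

lemma PreAll_sub:
  "PreAll n z \<subseteq> (\<lambda>\<alpha>. (xpt E (fst z) \<alpha> n, frac (snd z + - cs n (xpt E (fst z) \<alpha> n)))) ` words l n"
proof
  fix \<zeta> assume "\<zeta> \<in> PreAll n z"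
  then have a: "\<zeta> \<in> torus" "(fT E \<tau> ^^ n) \<zeta> = z" by (auto simp: PreAll_def)
  have w: "wd n (fst \<zeta>) \<in> words l n" using a(1) torus_iff wd_words by blast
  note d = pre_det[OF a]
  have "\<zeta> = (xpt E (fst z) (wd n (fst \<zeta>)) n, frac (snd z + - cs n (xpt E (fst z) (wd n (fst \<zeta>)) n)))"
    using d(1,2) by (metis prod.collapse)
  then show "\<zeta> \<in> (\<lambda>\<alpha>. (xpt E (fst z) \<alpha> n, frac (snd z + - cs n (xpt E (fst z) \<alpha> n)))) ` words l n"
    using w by blast
qed

lemma PreAll_fin: "finite (PreAll n z)" and PreAll_card: "card (PreAll n z) \<le> card (words l n)"
proof -
  show "finite (PreAll n z)" by (rule finite_subset[OF PreAll_sub finite_imageI[OF finite_words]])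
  show "card (PreAll n z) \<le> card (words l n)"
    by (rule order_trans[OF card_mono[OF finite_imageI[OF finite_words] PreAll_sub] card_image_le[OF finite_words]])
qed

lemma Pre_sub: "Pre R n z v \<subseteq> PreAll n z"
  by (auto simp: Pre_def PreAll_def)

lemma Pre_fin: "finite (Pre R n z v)"
  by (rule finite_subset[OF Pre_sub PreAll_fin])

lemma Pre_card: "card (Pre R n z v) \<le> card (words l n)"
  by (rule order_trans[OF card_mono[OF PreAll_fin Pre_sub] PreAll_card])

lemma Ncount_bdd: "bdd_above {card (Pre R n z v) | z v. z \<in> torus \<and> norm v = 1}"
  by (rule bdd_aboveI[of _ "card (words l n)"]) (auto intro: Pre_card)

lemma Ncount_ge: "z \<in> torus \<Longrightarrow> norm v = 1 \<Longrightarrow> card (Pre R n z v) \<le> Ncount E \<tau> lam R n"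
  unfolding Ncount_eq by (rule cSup_upper[OF _ Ncount_bdd]) blast

lemma Ncount_le: "(\<And>z v. z \<in> torus \<Longrightarrow> norm v = (1::real) \<Longrightarrow> card (Pre R n z v) \<le> K) \<Longrightarrow> Ncount E \<tau> lam R n \<le> K"
  unfolding Ncount_eq
proof (rule cSup_least)
  have "(0::real, 0::real) \<in> torus" "norm (1::real, 0::real) = 1" by (auto simp: torus_def circle_def)
  then show "{card (Pre R n z v) | z v. z \<in> torus \<and> norm v = 1} \<noteq> {}" by blast
qed auto

definition Bset :: "real \<Rightarrow> nat \<Rightarrow> (nat \<Rightarrow> (nat \<Rightarrow> nat) \<Rightarrow> (nat \<Rightarrow> nat)) \<Rightarrow> real \<Rightarrow> real \<Rightarrow> (nat \<Rightarrow> nat) set" where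
  "Bset Rt n ext y \<eta> = {\<alpha> \<in> words l n.
        \<bar>\<eta> - Sfun E \<tau> y (ext n \<alpha>)\<bar> \<le> Rt / deriv (E ^^ n) (xpt E y \<alpha> n)}"

lemma Ntilde_eq: "Ntilde E \<tau> l ext Rt n = Sup {card (Bset Rt n ext y \<eta>) | y \<eta>. y \<in> circle}"
  by (simp add: Ntilde_def Bset_def)

lemma Bset_card: "card (Bset Rt n ext y \<eta>) \<le> card (words l n)"
  by (rule card_mono[OF finite_words]) (auto simp: Bset_def)

lemma Bset_fin: "finite (Bset Rt n ext y \<eta>)"
  by (rule finite_subset[OF _ finite_words]) (auto simp: Bset_def)

lemma Ntilde_ge: "y \<in> circle \<Longrightarrow> card (Bset Rt n ext y \<eta>) \<le> Ntilde E \<tau> l ext Rt n"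
  unfolding Ntilde_eq
  by (rule cSup_upper) (auto intro!: bdd_aboveI[of _ "card (words l n)"] Bset_card)

lemma Ntilde_le: "(\<And>y \<eta>. y \<in> circle \<Longrightarrow> card (Bset Rt n ext y \<eta>) \<le> K) \<Longrightarrow> Ntilde E \<tau> l ext Rt n \<le> K"
  unfolding Ntilde_eq
proof (rule cSup_least)
  have "(0::real) \<in> circle" by (auto simp: circle_def)
  then show "{card (Bset Rt n ext y \<eta>) | y \<eta>. y \<in> circle} \<noteq> {}" by blast
qed auto

lemma alg1:
  fixes a b t p th :: real
  assumes "p > 0" "a \<noteq> 0"
  shows "\<bar>b - t * (a / p)\<bar> \<le> th * \<bar>a / p\<bar> \<longleftrightarrow> \<bar>b / a - t / p\<bar> \<le> th / p"
proof -
  have "b - t * (a / p) = a * (b / a - t / p)" using assms by (simp add: field_simps)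
  then have e1: "\<bar>b - t * (a / p)\<bar> = \<bar>a\<bar> * \<bar>b / a - t / p\<bar>" by (simp only: abs_mult)
  have e2: "th * \<bar>a / p\<bar> = \<bar>a\<bar> * (th / p)" using assms by (simp add: abs_div)
  have "\<bar>a\<bar> > 0" using assms by simp
  then show ?thesis unfolding e1 e2 by (rule mult_le_cancel_left_pos)
qed

lemma cone_img:
  assumes "v \<noteq> 0"
  shows "v \<in> Dfn E \<tau> n \<zeta> ` cone lam R \<longleftrightarrow>
     fst v \<noteq> 0 \<and> \<bar>snd v / fst v - Sn n (fst \<zeta>)\<bar> \<le> theta lam R / P n (fst \<zeta>)"
proof -
  define p where "p = P n (fst \<zeta>)"
  define t where "t = T n (fst \<zeta>)"
  have p: "p > 0" unfolding p_def by (rule P_pos)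
  have img: "v \<in> Dfn E \<tau> n \<zeta> ` cone lam R \<longleftrightarrow>
     (\<exists>\<xi> \<eta>. \<bar>\<eta>\<bar> \<le> theta lam R * \<bar>\<xi>\<bar> \<and> v = (p * \<xi>, \<eta> + t * \<xi>))"
    by (auto simp: cone_def Dfn_form p_def t_def image_iff)
  show ?thesis
  proof
    assume "v \<in> Dfn E \<tau> n \<zeta> ` cone lam R"
    then obtain \<xi> \<eta> where h: "\<bar>\<eta>\<bar> \<le> theta lam R * \<bar>\<xi>\<bar>" "v = (p * \<xi>, \<eta> + t * \<xi>)" using img by blast
    have "\<xi> \<noteq> 0"
    proof
      assume "\<xi> = 0"
      then have "\<eta> = 0" using h(1) by simp
      then show False using h(2) \<open>\<xi> = 0\<close> assms by (simp add: zero_prod_def)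
    qed
    then have a: "fst v \<noteq> 0" using h(2) p by simp
    have "snd v - t * (fst v / p) = \<eta>" "fst v / p = \<xi>" using h(2) p by auto
    then have "\<bar>snd v - t * (fst v / p)\<bar> \<le> theta lam R * \<bar>fst v / p\<bar>" using h(1) by simp
    then show "fst v \<noteq> 0 \<and> \<bar>snd v / fst v - Sn n (fst \<zeta>)\<bar> \<le> theta lam R / P n (fst \<zeta>)"
      using alg1[OF p a] a unfolding Sn_def p_def[symmetric] t_def[symmetric] by simp
  next
    assume h: "fst v \<noteq> 0 \<and> \<bar>snd v / fst v - Sn n (fst \<zeta>)\<bar> \<le> theta lam R / P n (fst \<zeta>)"
    then have "\<bar>snd v - t * (fst v / p)\<bar> \<le> theta lam R * \<bar>fst v / p\<bar>"
      using alg1[OF p, of "fst v" "snd v" t "theta lam R"] unfolding Sn_def p_def[symmetric] t_def[symmetric] by simp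
    moreover have "v = (p * (fst v / p), (snd v - t * (fst v / p)) + t * (fst v / p))"
      using p by (simp add: prod_eq_iff)
    ultimately show "v \<in> Dfn E \<tau> n \<zeta> ` cone lam R" using img by blast
  qed
qed

end



context skew begin

lemma ext_props:
  assumes "valid_ext l ext" "\<alpha> \<in> words l n"
  shows "\<forall>i\<ge>1. ext n \<alpha> i < l" "xpt E x (ext n \<alpha>) n = xpt E x \<alpha> n"
proof -
  have h: "ext n \<alpha> \<in> seqs l" "\<forall>i\<in>{1..n}. ext n \<alpha> i = \<alpha> i"
    using assms unfolding valid_ext_def by auto
  then show "\<forall>i\<ge>1. ext n \<alpha> i < l" by (simp add: seqs_def)
  show "xpt E x (ext n \<alpha>) n = xpt E x \<alpha> n" by (rule xpt_cong) (use h in auto)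
qed

lemma Sfun_ext:
  assumes "valid_ext l ext" "\<alpha> \<in> words l n" "x \<in> circle"
  shows "\<bar>Sfun E \<tau> x (ext n \<alpha>) - Sn n (xpt E x \<alpha> n)\<bar> \<le> theta lam M / P n (xpt E x \<alpha> n)"
  using Sfun_approx[OF ext_props(1)[OF assms(1,2)] assms(3), of n] ext_props(2)[OF assms(1,2)] by simp

lemma part2:
  assumes ve: "valid_ext l ext" and Rt: "theta lam R + theta lam M \<le> Rt"
  shows "Ncount E \<tau> lam R n \<le> Ntilde E \<tau> l ext Rt n"
proof (rule Ncount_le)
  fix z and v :: "real \<times> real" assume z: "z \<in> torus" and v: "norm v = 1"
  define x where "x = fst z"
  have x: "x \<in> circle" using z torus_iff x_def by auto
  have v0: "v \<noteq> 0" using v by auto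
  define f where "f \<zeta> = wd n (fst \<zeta>)" for \<zeta> :: "real \<times> real"
  have "card (Pre R n z v) \<le> card (Bset Rt n ext x (snd v / fst v))"
  proof (rule card_inj_on_le[OF _ _ Bset_fin])
    show "inj_on f (Pre R n z v)"
    proof (rule inj_onI)
      fix \<zeta>1 \<zeta>2 assume a: "\<zeta>1 \<in> Pre R n z v" "\<zeta>2 \<in> Pre R n z v" "f \<zeta>1 = f \<zeta>2"
      have t: "\<zeta>1 \<in> torus" "(fT E \<tau> ^^ n) \<zeta>1 = z" "\<zeta>2 \<in> torus" "(fT E \<tau> ^^ n) \<zeta>2 = z"
        using a by (auto simp: Pre_def)
      have f1: "fst \<zeta>1 = fst \<zeta>2"
        using pre_det(1)[OF t(1,2)] pre_det(1)[OF t(3,4)] a(3) unfolding f_def by metis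
      moreover have "snd \<zeta>1 = snd \<zeta>2"
        using pre_det(2)[OF t(1,2)] pre_det(2)[OF t(3,4)] f1 by metis
      ultimately show "\<zeta>1 = \<zeta>2" by (rule prod_eqI)
    qed
    show "f ` Pre R n z v \<subseteq> Bset Rt n ext x (snd v / fst v)"
    proof
      fix \<alpha> assume "\<alpha> \<in> f ` Pre R n z v"
      then obtain \<zeta> where \<zeta>: "\<zeta> \<in> Pre R n z v" and \<alpha>: "\<alpha> = wd n (fst \<zeta>)" unfolding f_def by blast
      have t: "\<zeta> \<in> torus" "(fT E \<tau> ^^ n) \<zeta> = z" "v \<in> Dfn E \<tau> n \<zeta> ` cone lam R"
        using \<zeta> by (auto simp: Pre_def)
      define y where "y = fst \<zeta>"
      have y: "y \<in> circle" using t(1) torus_iff y_def by auto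
      have w: "\<alpha> \<in> words l n" using wd_words[OF y] \<alpha> y_def by simp
      have xp: "xpt E x \<alpha> n = y" using pre_det(1)[OF t(1,2)] \<alpha> unfolding x_def y_def by simp
      have c: "\<bar>snd v / fst v - Sn n y\<bar> \<le> theta lam R / P n y"
        using cone_img[OF v0] t(3) unfolding y_def by blast
      have s: "\<bar>Sfun E \<tau> x (ext n \<alpha>) - Sn n y\<bar> \<le> theta lam M / P n y"
        using Sfun_ext[OF ve w x] xp by simp
      have Pp: "0 < P n y" by (rule P_pos)
      have "\<bar>snd v / fst v - Sfun E \<tau> x (ext n \<alpha>)\<bar> \<le> theta lam R / P n y + theta lam M / P n y"
        using c s by linarith
      also have "\<dots> = (theta lam R + theta lam M) / P n y" by (simp add: add_divide_distrib)
      also have "\<dots> \<le> Rt / P n y" by (rule divide_right_mono[OF Rt]) (use Pp in simp)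
      finally show "\<alpha> \<in> Bset Rt n ext x (snd v / fst v)"
        unfolding Bset_def using w xp by (simp add: deriv_En)
    qed
  qed
  also have "\<dots> \<le> Ntilde E \<tau> l ext Rt n" by (rule Ntilde_ge[OF x])
  finally show "card (Pre R n z v) \<le> Ntilde E \<tau> l ext Rt n" .
qed

lemma part1:
  assumes ve: "valid_ext l ext" and Rt: "Rt + theta lam M \<le> theta lam R"
  shows "Ntilde E \<tau> l ext Rt n \<le> Ncount E \<tau> lam R n"
proof (rule Ntilde_le)
  fix y and \<eta> :: real assume y: "y \<in> circle"
  define nv where "nv = norm (1::real, \<eta>)"
  have nv: "nv > 0" unfolding nv_def by (simp add: zero_prod_def)
  define v where "v = scaleR (1 / nv) (1::real, \<eta>)"
  have "norm v = \<bar>1 / nv\<bar> * nv" unfolding v_def nv_def by (rule norm_scaleR)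
  then have vn: "norm v = 1" using nv by simp
  have v0: "v \<noteq> 0" using vn by auto
  have fv: "fst v \<noteq> 0" "snd v / fst v = \<eta>" unfolding v_def using nv by auto
  define z where "z = (y, 0::real)"
  have z: "z \<in> torus" unfolding z_def torus_def circle_def using y circle_def by auto
  define g where "g \<alpha> = (xpt E y \<alpha> n, frac (0 + - cs n (xpt E y \<alpha> n)))" for \<alpha>
  have "card (Bset Rt n ext y \<eta>) \<le> card (Pre R n z v)"
  proof (rule card_inj_on_le[OF _ _ Pre_fin])
    show "inj_on g (Bset Rt n ext y \<eta>)"
    proof (rule inj_onI)
      fix \<alpha> \<beta> assume a: "\<alpha> \<in> Bset Rt n ext y \<eta>" "\<beta> \<in> Bset Rt n ext y \<eta>" "g \<alpha> = g \<beta>"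
      have w: "\<alpha> \<in> words l n" "\<beta> \<in> words l n" using a by (auto simp: Bset_def)
      have u: "xpt E y \<alpha> n = xpt E y \<beta> n" using a(3) unfolding g_def by simp
      have "\<alpha> = wd n (xpt E y \<alpha> n)" by (rule Icyl_wd[OF w(1) xpt(1)[OF words_okw[OF w(1)] y]])
      moreover have "\<beta> = wd n (xpt E y \<beta> n)" by (rule Icyl_wd[OF w(2) xpt(1)[OF words_okw[OF w(2)] y]])
      ultimately show "\<alpha> = \<beta>" using u by simp
    qed
    show "g ` Bset Rt n ext y \<eta> \<subseteq> Pre R n z v"
    proof
      fix \<zeta> assume "\<zeta> \<in> g ` Bset Rt n ext y \<eta>"
      then obtain \<alpha> where a: "\<alpha> \<in> Bset Rt n ext y \<eta>" and \<zeta>: "\<zeta> = g \<alpha>" by blast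
      have w: "\<alpha> \<in> words l n" and b: "\<bar>\<eta> - Sfun E \<tau> y (ext n \<alpha>)\<bar> \<le> Rt / deriv (E ^^ n) (xpt E y \<alpha> n)"
        using a by (auto simp: Bset_def)
      define u where "u = xpt E y \<alpha> n"
      have uc: "u \<in> Icyl E \<alpha> n" "(Ec E ^^ n) u = y" using xpt[OF words_okw[OF w] y] u_def by auto
      have ucirc: "u \<in> circle" using uc(1) by (rule Icyl_circle)
      have sc: "snd \<zeta> \<in> circle" unfolding \<zeta> g_def by (simp add: circle_def frac_lt_1)
      have fz: "fst \<zeta> = u" unfolding \<zeta> g_def u_def by simp
      have tor: "\<zeta> \<in> torus" using sc fz ucirc torus_iff by auto
      have img: "(fT E \<tau> ^^ n) \<zeta> = z"
      proof -
        have "(fT E \<tau> ^^ n) \<zeta> = ((Ec E ^^ n) u, frac (frac (- cs n u) + cs n u))"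
          using fT_pair'[OF sc] fz unfolding \<zeta> g_def u_def by simp
        also have "\<dots> = z" using uc(2) unfolding z_def by simp
        finally show ?thesis .
      qed
      have s: "\<bar>Sfun E \<tau> y (ext n \<alpha>) - Sn n u\<bar> \<le> theta lam M / P n u"
        using Sfun_ext[OF ve w y] u_def by simp
      have b': "\<bar>\<eta> - Sfun E \<tau> y (ext n \<alpha>)\<bar> \<le> Rt / P n u" using b u_def by (simp add: deriv_En)
      have Pp: "0 < P n u" by (rule P_pos)
      have "\<bar>snd v / fst v - Sn n u\<bar> \<le> Rt / P n u + theta lam M / P n u"
        using s b' fv(2) by linarith
      also have "\<dots> = (Rt + theta lam M) / P n u" by (simp add: add_divide_distrib)
      also have "\<dots> \<le> theta lam R / P n u" by (rule divide_right_mono[OF Rt]) (use Pp in simp)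
      finally have "v \<in> Dfn E \<tau> n \<zeta> ` cone lam R" using cone_img[OF v0] fv(1) fz by simp
      then show "\<zeta> \<in> Pre R n z v" using tor img by (simp add: Pre_def)
    qed
  qed
  also have "\<dots> \<le> Ncount E \<tau> lam R n" by (rule Ncount_ge[OF z vn])
  finally show "card (Bset Rt n ext y \<eta>) \<le> Ncount E \<tau> lam R n" .
qed

end



lemma fekete:
  fixes a :: "nat \<Rightarrow> real"
  assumes nn: "\<And>n. 0 \<le> a n" and sub: "\<And>m n. a (m + n) \<le> a m + a n"
  shows "(\<lambda>n. a n / real n) \<longlonglongrightarrow> Inf {a n / real n | n. n \<ge> 1}"
proof -
  define S where "S = {a n / real n | n. n \<ge> 1}"
  define L where "L = Inf S"
  have Sne: "S \<noteq> {}" unfolding S_def by auto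
  have Sbdd: "bdd_below S" unfolding S_def using nn by (auto intro!: bdd_belowI[of _ 0])
  have low: "L \<le> a n / real n" if "n \<ge> 1" for n
    unfolding L_def by (rule cInf_lower[OF _ Sbdd]) (use that in \<open>auto simp: S_def\<close>)
  have mult: "a (q * k + r) \<le> real q * a k + a r" for q k r
  proof (induction q)
    case 0 show ?case by simp
  next
    case (Suc q)
    have "a (Suc q * k + r) = a (k + (q * k + r))" by (simp add: algebra_simps)
    also have "\<dots> \<le> a k + a (q * k + r)" by (rule sub)
    also have "\<dots> \<le> a k + (real q * a k + a r)" using Suc by simp
    finally show ?case by (simp add: algebra_simps)
  qed
  have "(\<lambda>n. a n / real n) \<longlonglongrightarrow> L"
  proof (rule LIMSEQ_I)
    fix \<epsilon> :: real assume e: "\<epsilon> > 0"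
    have "L < L + \<epsilon> / 2" using e by simp
    then obtain s where "s \<in> S" "s < L + \<epsilon> / 2" using cInf_lessD[OF Sne] unfolding L_def by blast
    then obtain k where k: "k \<ge> 1" "a k / real k < L + \<epsilon> / 2" unfolding S_def by blast
    define C where "C = (\<Sum>r<k. a r)"
    have C: "a r \<le> C" if "r < k" for r
      unfolding C_def by (rule member_le_sum) (use that nn in auto)
    have C0: "0 \<le> C" unfolding C_def using nn by (simp add: sum_nonneg)
    obtain N :: nat where N: "real N > 2 * C / \<epsilon>" using reals_Archimedean2 by blast
    show "\<exists>no. \<forall>n\<ge>no. norm (a n / real n - L) < \<epsilon>"
    proof (intro exI allI impI)
      fix n assume n: "n \<ge> max N 1"
      have n1: "n \<ge> 1" using n by simp
      have nN: "real n \<ge> real N" using n by simp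
      define q where "q = n div k"
      define r where "r = n mod k"
      have nqr: "n = q * k + r" unfolding q_def r_def by simp
      have rk: "r < k" using k(1) unfolding r_def by simp
      have qk: "real q * real k \<le> real n" using nqr by (metis le_add1 of_nat_le_iff of_nat_mult)
      have an: "a n \<le> real q * a k + C" using mult[of q k r] C[OF rk] nqr by simp
      have npos: "real n > 0" using n1 by simp
      have kpos: "real k > 0" using k(1) by simp
      have ak0: "0 \<le> a k / real k" using nn kpos by simp
      have t1: "a n / real n \<le> (real q * a k) / real n + C / real n"
        using an npos by (simp add: add_divide_distrib[symmetric] divide_right_mono)
      have "(real q * a k) / real n = (real q * real k / real n) * (a k / real k)"
        using kpos by simp
      also have "\<dots> \<le> 1 * (a k / real k)"
        by (rule mult_right_mono[OF _ ak0]) (use qk npos in simp)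
      finally have t2: "(real q * a k) / real n \<le> a k / real k" by simp
      have "C < \<epsilon> * real N / 2" using N e by (simp add: field_simps)
      also have "\<dots> \<le> \<epsilon> * real n / 2" using nN e by simp
      finally have "C / real n < \<epsilon> / 2" using npos by (simp add: field_simps)
      then have "a n / real n < L + \<epsilon>" using t1 t2 k(2) by linarith
      moreover have "L \<le> a n / real n" by (rule low[OF n1])
      ultimately show "norm (a n / real n - L) < \<epsilon>" by simp
    qed
  qed
  then show ?thesis unfolding L_def S_def .
qed

context skew begin

definition coneA :: "real \<Rightarrow> (real \<times> real) set" where
  "coneA th = {w. \<bar>snd w\<bar> \<le> th * \<bar>fst w\<bar>}"

lemma cone_A: "cone lam R = coneA (theta lam R)"
  by (simp add: cone_def coneA_def)

lemma coneA_mono: assumes "th \<le> th'" shows "coneA th \<subseteq> coneA th'"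
proof
  fix w assume "w \<in> coneA th"
  then have "\<bar>snd w\<bar> \<le> th * \<bar>fst w\<bar>" by (simp add: coneA_def)
  moreover have "th * \<bar>fst w\<bar> \<le> th' * \<bar>fst w\<bar>" by (rule mult_right_mono[OF assms]) simp
  ultimately show "w \<in> coneA th'" by (simp add: coneA_def)
qed

definition gap :: "real \<Rightarrow> real" where "gap th = (M + th) / lam"

lemma Df_cone:
  assumes "0 \<le> th"
  shows "Df E \<tau> z ` coneA th \<subseteq> coneA (gap th)"
proof
  fix u assume "u \<in> Df E \<tau> z ` coneA th"
  then obtain w where w: "\<bar>snd w\<bar> \<le> th * \<bar>fst w\<bar>" and u: "u = Df E \<tau> z w"
    by (auto simp: coneA_def)
  define d where "d = deriv E (fst z)"
  have d: "lam \<le> d" unfolding d_def by (rule lamE)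
  have Mth: "0 \<le> M + th" using M_nonneg assms by simp
  have "\<bar>snd u\<bar> \<le> \<bar>deriv \<tau> (fst z)\<bar> * \<bar>fst w\<bar> + \<bar>snd w\<bar>"
    unfolding u Df_def by (simp add: abs_mult[symmetric] abs_triangle_ineq)
  also have "\<dots> \<le> M * \<bar>fst w\<bar> + th * \<bar>fst w\<bar>"
    by (rule add_mono[OF mult_right_mono[OF dt_le abs_ge_zero] w])
  also have "\<dots> = ((M + th) / lam) * (lam * \<bar>fst w\<bar>)" using lam_pos by (simp add: field_simps)
  also have "\<dots> \<le> ((M + th) / lam) * (d * \<bar>fst w\<bar>)"
    by (rule mult_left_mono) (use d Mth lam_pos in \<open>auto intro: mult_right_mono\<close>)
  also have "\<dots> = gap th * \<bar>fst u\<bar>"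
    unfolding u Df_def gap_def d_def using dE_pos[of "fst z"] by (simp add: abs_mult)
  finally show "u \<in> coneA (gap th)" by (simp add: coneA_def)
qed

lemma gap_nonneg: "0 \<le> th \<Longrightarrow> 0 \<le> (gap ^^ n) th"
  by (induction n) (auto simp: gap_def M_nonneg lam_pos intro!: divide_nonneg_pos)

lemma gap_iter: "(gap ^^ n) th - theta lam M = (th - theta lam M) / lam ^ n"
proof (induction n)
  case 0 then show ?case by simp
next
  case (Suc n)
  have "(gap ^^ Suc n) th = (M + (gap ^^ n) th) / lam" by (simp add: gap_def)
  also have "(gap ^^ n) th = theta lam M + (th - theta lam M) / lam ^ n" using Suc by simp
  finally have "(gap ^^ Suc n) th = (M + theta lam M + (th - theta lam M) / lam ^ n) / lam" by simp
  moreover have "M + theta lam M = lam * theta lam M" using lam1 by (simp add: theta_def field_simps)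
  ultimately show ?case using lam_pos by (simp add: field_simps)
qed

lemma Dfn_coneA:
  assumes "0 \<le> th"
  shows "Dfn E \<tau> n \<zeta> ` coneA th \<subseteq> coneA ((gap ^^ n) th)"
proof (induction n)
  case 0 then show ?case by simp
next
  case (Suc n)
  have "Dfn E \<tau> (Suc n) \<zeta> ` coneA th = Df E \<tau> ((fT E \<tau> ^^ n) \<zeta>) ` (Dfn E \<tau> n \<zeta> ` coneA th)"
    by (auto simp: image_iff)
  also have "\<dots> \<subseteq> Df E \<tau> ((fT E \<tau> ^^ n) \<zeta>) ` coneA ((gap ^^ n) th)"
    using Suc by (rule image_mono)
  also have "\<dots> \<subseteq> coneA (gap ((gap ^^ n) th))" by (rule Df_cone[OF gap_nonneg[OF assms]])
  finally show ?case by simp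
qed

lemma Dfn_cone_sub:
  assumes "0 \<le> theta lam R1" "(theta lam R1 - theta lam M) / lam ^ m + theta lam M \<le> theta lam R2"
  shows "Dfn E \<tau> m \<zeta> ` cone lam R1 \<subseteq> cone lam R2"
proof -
  have "Dfn E \<tau> m \<zeta> ` cone lam R1 \<subseteq> coneA ((gap ^^ m) (theta lam R1))"
    unfolding cone_A by (rule Dfn_coneA[OF assms(1)])
  also have "\<dots> \<subseteq> coneA (theta lam R2)"
    by (rule coneA_mono) (use gap_iter[of m "theta lam R1"] assms(2) in linarith)
  finally show ?thesis unfolding cone_A .
qed

lemma Dfn_add: "Dfn E \<tau> (n + m) \<zeta> w = Dfn E \<tau> n ((fT E \<tau> ^^ m) \<zeta>) (Dfn E \<tau> m \<zeta> w)"
  by (induction n) (simp_all add: funpow_add)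

lemma fT_torus: "z \<in> torus \<Longrightarrow> (fT E \<tau> ^^ m) z \<in> torus"
  by (induction m) (auto simp: fT_def torus_def circle_def frac_lt_1)

lemma Dfn_inj: "Dfn E \<tau> n \<zeta> w1 = Dfn E \<tau> n \<zeta> w2 \<Longrightarrow> w1 = w2"
  using P_pos[of n "fst \<zeta>"] by (auto simp: Dfn_form prod_eq_iff)

lemma Dfn_scale: "Dfn E \<tau> n \<zeta> (c *\<^sub>R w) = c *\<^sub>R Dfn E \<tau> n \<zeta> w"
  by (simp add: Dfn_form algebra_simps)

lemma Dfn_zero: "Dfn E \<tau> n \<zeta> 0 = 0"
  by (simp add: Dfn_form zero_prod_def)

lemma cone_scale: assumes "w \<in> cone lam R" shows "c *\<^sub>R w \<in> cone lam R"
proof -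
  have "\<bar>snd w\<bar> \<le> theta lam R * \<bar>fst w\<bar>" using assms by (simp add: cone_def)
  then have "\<bar>c\<bar> * \<bar>snd w\<bar> \<le> \<bar>c\<bar> * (theta lam R * \<bar>fst w\<bar>)" by (rule mult_left_mono) simp
  then show ?thesis by (simp add: cone_def abs_mult mult.left_commute)
qed

end



context skew begin

lemma norm_unit: "w \<noteq> 0 \<Longrightarrow> norm ((1 / norm w) *\<^sub>R w) = 1"
  by simp

lemma submult:
  assumes cs: "\<And>\<zeta>. Dfn E \<tau> m \<zeta> ` cone lam R1 \<subseteq> cone lam R2"
  shows "Ncount E \<tau> lam R1 (n + m) \<le> Ncount E \<tau> lam R2 n * Ncount E \<tau> lam R1 m"
proof (rule Ncount_le)
  fix z and v :: "real \<times> real" assume z: "z \<in> torus" and v: "norm v = 1"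
  define Z' where "Z' = Pre R2 n z v"
  define wv where "wv \<zeta>' = (SOME w. Dfn E \<tau> n \<zeta>' w = v)" for \<zeta>'
  define u where "u \<zeta>' = (1 / norm (wv \<zeta>')) *\<^sub>R wv \<zeta>'" for \<zeta>'
  define F where "F \<zeta>' = Pre R1 m \<zeta>' (u \<zeta>')" for \<zeta>'
  have v0: "v \<noteq> 0" using v by auto
  have wvv: "Dfn E \<tau> n \<zeta>' (wv \<zeta>') = v" if "Dfn E \<tau> n \<zeta>' w = v" for \<zeta>' w
    unfolding wv_def by (rule someI[of _ w]) (rule that)
  have sub: "Pre R1 (n + m) z v \<subseteq> (\<Union>\<zeta>'\<in>Z'. F \<zeta>')"
  proof
    fix \<zeta> assume \<zeta>: "\<zeta> \<in> Pre R1 (n + m) z v"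
    then have t: "\<zeta> \<in> torus" "(fT E \<tau> ^^ (n + m)) \<zeta> = z" and "v \<in> Dfn E \<tau> (n + m) \<zeta> ` cone lam R1"
      by (auto simp: Pre_def)
    then obtain c where c: "c \<in> cone lam R1" "v = Dfn E \<tau> (n + m) \<zeta> c" by blast
    define \<zeta>' where "\<zeta>' = (fT E \<tau> ^^ m) \<zeta>"
    define w where "w = Dfn E \<tau> m \<zeta> c"
    have vw: "v = Dfn E \<tau> n \<zeta>' w" using c(2) Dfn_add unfolding \<zeta>'_def w_def by simp
    have wc: "w \<in> cone lam R2" using cs c(1) unfolding w_def by blast
    have t': "\<zeta>' \<in> torus" using fT_torus[OF t(1)] \<zeta>'_def by simp
    have "(fT E \<tau> ^^ n) \<zeta>' = z" using t(2) unfolding \<zeta>'_def by (simp add: funpow_add)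
    then have inZ: "\<zeta>' \<in> Z'" using t' vw wc unfolding Z'_def Pre_def by blast
    have "Dfn E \<tau> n \<zeta>' (wv \<zeta>') = v" using wvv vw by metis
    then have ww: "wv \<zeta>' = w" using vw Dfn_inj by metis
    have "u \<zeta>' = (1 / norm w) *\<^sub>R w" by (simp add: u_def ww)
    also have "\<dots> = Dfn E \<tau> m \<zeta> ((1 / norm w) *\<^sub>R c)" by (simp add: w_def Dfn_scale)
    finally have "u \<zeta>' \<in> Dfn E \<tau> m \<zeta> ` cone lam R1" using cone_scale[OF c(1)] by blast
    then have "\<zeta> \<in> F \<zeta>'" using t(1) unfolding F_def Pre_def \<zeta>'_def by blast
    then show "\<zeta> \<in> (\<Union>\<zeta>'\<in>Z'. F \<zeta>')" using inZ by blast
  qed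
  have fz: "finite Z'" unfolding Z'_def by (rule Pre_fin)
  have Fb: "card (F \<zeta>') \<le> Ncount E \<tau> lam R1 m" if "\<zeta>' \<in> Z'" for \<zeta>'
  proof -
    have a: "\<zeta>' \<in> torus" "v \<in> Dfn E \<tau> n \<zeta>' ` cone lam R2" using that by (auto simp: Z'_def Pre_def)
    then obtain w where "Dfn E \<tau> n \<zeta>' w = v" by auto
    then have "Dfn E \<tau> n \<zeta>' (wv \<zeta>') = v" by (rule wvv)
    then have "wv \<zeta>' \<noteq> 0" using v0 by (metis Dfn_zero)
    then have "norm (u \<zeta>') = 1" unfolding u_def by (rule norm_unit)
    then show ?thesis unfolding F_def by (rule Ncount_ge[OF a(1)])
  qed
  have "card (Pre R1 (n + m) z v) \<le> card (\<Union>\<zeta>'\<in>Z'. F \<zeta>')"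
    by (rule card_mono[OF _ sub]) (use fz Pre_fin in \<open>auto simp: F_def\<close>)
  also have "\<dots> \<le> (\<Sum>\<zeta>'\<in>Z'. card (F \<zeta>'))" by (rule card_UN_le[OF fz])
  also have "\<dots> \<le> card Z' * Ncount E \<tau> lam R1 m"
    using sum_bounded_above[of Z' "\<lambda>\<zeta>'. card (F \<zeta>')" "Ncount E \<tau> lam R1 m"] Fb by simp
  also have "\<dots> \<le> Ncount E \<tau> lam R2 n * Ncount E \<tau> lam R1 m"
    unfolding Z'_def by (rule mult_right_mono[OF Ncount_ge[OF z v]]) simp
  finally show "card (Pre R1 (n + m) z v) \<le> Ncount E \<tau> lam R2 n * Ncount E \<tau> lam R1 m"
    unfolding Z'_def .
qed

lemma Ntilde_pos:
  assumes ve: "valid_ext l ext" and Rt: "0 \<le> Rt"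
  shows "1 \<le> Ntilde E \<tau> l ext Rt n"
proof -
  define \<alpha>0 where "\<alpha>0 = (\<lambda>i::nat. if i \<in> {1..n} then 0::nat else undefined)"
  have w: "\<alpha>0 \<in> words l n" unfolding \<alpha>0_def words_def using l2 by (auto simp: PiE_def extensional_def)
  have y: "(0::real) \<in> circle" by (simp add: circle_def)
  have "0 \<le> Rt / deriv (E ^^ n) (xpt E 0 \<alpha>0 n)"
    using Rt P_pos by (simp add: deriv_En divide_nonneg_pos)
  then have "\<alpha>0 \<in> Bset Rt n ext 0 (Sfun E \<tau> 0 (ext n \<alpha>0))" using w by (simp add: Bset_def)
  then have "0 < card (Bset Rt n ext 0 (Sfun E \<tau> 0 (ext n \<alpha>0)))"
    using Bset_fin card_gt_0_iff by blast
  also have "\<dots> \<le> Ntilde E \<tau> l ext Rt n" by (rule Ntilde_ge[OF y])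
  finally show ?thesis by simp
qed

lemma theta_diff: "theta lam R - theta lam M = (R - M) / (lam - 1)"
  by (simp add: theta_def diff_divide_distrib)

lemma Ncount_pos:
  assumes ve: "valid_ext l ext" and RM: "M < R"
  shows "1 \<le> Ncount E \<tau> lam R n"
proof -
  have "0 \<le> theta lam R - theta lam M" unfolding theta_diff using RM lam1 by simp
  then have "Ntilde E \<tau> l ext (theta lam R - theta lam M) n \<le> Ncount E \<tau> lam R n"
    using part1[OF ve, of "theta lam R - theta lam M" R n] by simp
  moreover have "1 \<le> Ntilde E \<tau> l ext (theta lam R - theta lam M) n"
    by (rule Ntilde_pos[OF ve]) (use \<open>0 \<le> theta lam R - theta lam M\<close> in simp)
  ultimately show ?thesis by simp
qed

lemma theta_nonneg: "0 \<le> c \<Longrightarrow> 0 \<le> theta lam c"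
  using lam1 by (simp add: theta_def)

lemma cone_inv:
  assumes "M \<le> R"
  shows "Dfn E \<tau> m \<zeta> ` cone lam R \<subseteq> cone lam R"
proof (rule Dfn_cone_sub)
  show "0 \<le> theta lam R" using assms M_nonneg by (intro theta_nonneg) simp
  have d: "0 \<le> theta lam R - theta lam M" unfolding theta_diff using assms lam1 by simp
  have "1 \<le> lam ^ m" using lam1 by simp
  then have "(theta lam R - theta lam M) / lam ^ m \<le> theta lam R - theta lam M"
    using d by (simp add: divide_le_eq mult_le_cancel_left1 mult_le_cancel_left_pos)
  then show "(theta lam R - theta lam M) / lam ^ m + theta lam M \<le> theta lam R" by simp
qed

end



context skew begin

lemma third:
  assumes ve: "valid_ext l ext" and RM: "M < R"
  shows "Ntau E \<tau> lam R = 1 \<longleftrightarrow>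
    (\<forall>Rt>0. (\<lambda>n. ln (real (Ntilde E \<tau> l ext Rt n)) / real n) \<longlonglongrightarrow> 0)"
proof -
  define N where "N n = real (Ncount E \<tau> lam R n)" for n
  define a where "a n = ln (N n)" for n
  have N1: "1 \<le> N n" for n unfolding N_def using Ncount_pos[OF ve RM, of n] by simp
  have a0: "0 \<le> a n" for n unfolding a_def using N1[of n] by simp
  have asub: "a (m + n) \<le> a m + a n" for m n
  proof -
    have "Ncount E \<tau> lam R (m + n) \<le> Ncount E \<tau> lam R m * Ncount E \<tau> lam R n"
      by (rule submult[OF cone_inv]) (use RM in simp)
    then have "N (m + n) \<le> N m * N n" unfolding N_def by (metis of_nat_le_iff of_nat_mult)
    then have "ln (N (m + n)) \<le> ln (N m * N n)" using N1[of "m + n"] N1[of m] N1[of n] by simp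
    also have "\<dots> = a m + a n" unfolding a_def using N1[of m] N1[of n] by (simp add: ln_mult)
    finally show ?thesis unfolding a_def .
  qed
  have pw: "(\<lambda>n. real (Ncount E \<tau> lam R n) powr (1 / real n)) = (\<lambda>n. exp (a n / real n))"
  proof
    fix n
    have "N n \<noteq> 0" using N1[of n] by simp
    then show "real (Ncount E \<tau> lam R n) powr (1 / real n) = exp (a n / real n)"
      unfolding N_def[symmetric] a_def powr_def by simp
  qed
  define L where "L = Inf {a n / real n | n. n \<ge> 1}"
  have La: "(\<lambda>n. a n / real n) \<longlonglongrightarrow> L" unfolding L_def by (rule fekete[OF a0 asub])
  have ex: "(\<lambda>n. exp (a n / real n)) \<longlonglongrightarrow> exp L" by (rule tendsto_exp[OF La])
  have NtL: "Ntau E \<tau> lam R = exp L" unfolding Ntau_def pw using limI[OF ex] .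
  show ?thesis
  proof
    assume "Ntau E \<tau> lam R = 1"
    then have L0: "L = 0" using NtL by simp
    show "\<forall>Rt>0. (\<lambda>n. ln (real (Ntilde E \<tau> l ext Rt n)) / real n) \<longlonglongrightarrow> 0"
    proof (intro allI impI)
      fix Rt :: real assume Rt: "Rt > 0"
      define R' where "R' = M + Rt * (lam - 1)"
      have thR': "theta lam R' = theta lam M + Rt" unfolding R'_def theta_def using lam1 by (simp add: field_simps)
      have R'M: "M < R'" unfolding R'_def using Rt lam1 by simp
      define \<delta> where "\<delta> = theta lam R - theta lam M"
      have \<delta>: "\<delta> > 0" unfolding \<delta>_def theta_diff using RM lam1 by simp
      obtain m where m: "Rt / \<delta> < lam ^ m" using real_arch_pow[OF lam1] by blast
      have lp: "0 < lam ^ m" using lam_pos by simp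
      have "Rt < \<delta> * lam ^ m" using m \<delta> by (simp add: divide_less_eq mult.commute)
      then have "Rt / lam ^ m < \<delta>" using lp by (simp add: divide_less_eq mult.commute)
      then have cone: "Dfn E \<tau> m \<zeta> ` cone lam R' \<subseteq> cone lam R" for \<zeta>
        by (intro Dfn_cone_sub) (use thR' M_nonneg theta_nonneg[OF M_nonneg] Rt \<delta>_def in auto)
      define C where "C = real (Ncount E \<tau> lam R' m)"
      have C1: "1 \<le> C" unfolding C_def using Ncount_pos[OF ve R'M, of m] by simp
      have Nt1: "1 \<le> real (Ntilde E \<tau> l ext Rt k)" for k using Ntilde_pos[OF ve, of Rt k] Rt by simp
      have bound: "real (Ntilde E \<tau> l ext Rt (j + m)) \<le> N j * C" for j
      proof -
        have "Ntilde E \<tau> l ext Rt (j + m) \<le> Ncount E \<tau> lam R' (j + m)"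
          by (rule part1[OF ve]) (use thR' in simp)
        also have "\<dots> \<le> Ncount E \<tau> lam R j * Ncount E \<tau> lam R' m" by (rule submult[OF cone])
        finally show ?thesis unfolding N_def C_def by (metis of_nat_le_iff of_nat_mult)
      qed
      have lb: "ln (real (Ntilde E \<tau> l ext Rt (j + m))) \<le> a j + ln C" for j
      proof -
        have "ln (real (Ntilde E \<tau> l ext Rt (j + m))) \<le> ln (N j * C)"
          using bound[of j] Nt1[of "j + m"] N1[of j] C1 by simp
        also have "\<dots> = a j + ln C" unfolding a_def using N1[of j] C1 by (simp add: ln_mult)
        finally show ?thesis .
      qed
      have c0: "(\<lambda>j. ln C / (real m + real j)) \<longlonglongrightarrow> 0"
        by (rule real_tendsto_divide_at_top[OF tendsto_const
              filterlim_tendsto_add_at_top[OF tendsto_const filterlim_real_sequentially]])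
      have up: "(\<lambda>j. a j / real j + ln C / (real m + real j)) \<longlonglongrightarrow> 0"
        using tendsto_add[OF La c0] L0 by simp
      have "(\<lambda>j. ln (real (Ntilde E \<tau> l ext Rt (j + m))) / real (j + m)) \<longlonglongrightarrow> 0"
      proof (rule tendsto_sandwich[OF _ _ tendsto_const up])
        show "\<forall>\<^sub>F j in sequentially. 0 \<le> ln (real (Ntilde E \<tau> l ext Rt (j + m))) / real (j + m)"
          using Nt1 by (intro always_eventually allI divide_nonneg_nonneg) simp_all
        have "ln (real (Ntilde E \<tau> l ext Rt (j + m))) / real (j + m) \<le> a j / real j + ln C / (real m + real j)"
          if j: "j \<ge> 1" for j
        proof -
          have jp: "0 < real (j + m)" using j by simp
          have "ln (real (Ntilde E \<tau> l ext Rt (j + m))) / real (j + m) \<le> (a j + ln C) / real (j + m)"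
            by (rule divide_right_mono[OF lb]) simp
          also have "\<dots> = a j / real (j + m) + ln C / (real m + real j)" by (simp add: add_divide_distrib)
          also have "a j / real (j + m) \<le> a j / real j"
            by (rule divide_left_mono[OF _ a0]) (use j in simp_all)
          finally show ?thesis by simp
        qed
        then show "\<forall>\<^sub>F j in sequentially. ln (real (Ntilde E \<tau> l ext Rt (j + m))) / real (j + m)
            \<le> a j / real j + ln C / (real m + real j)"
          by (intro eventually_sequentiallyI[of 1]) simp
      qed
      then show "(\<lambda>n. ln (real (Ntilde E \<tau> l ext Rt n)) / real n) \<longlonglongrightarrow> 0"
        by (rule LIMSEQ_offset[where f = "\<lambda>n. ln (real (Ntilde E \<tau> l ext Rt n)) / real n" and k = m])
    qed
  next
    assume h: "\<forall>Rt>0. (\<lambda>n. ln (real (Ntilde E \<tau> l ext Rt n)) / real n) \<longlonglongrightarrow> 0"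
    define Rt0 where "Rt0 = theta lam R + theta lam M + 1"
    have tR: "0 \<le> theta lam R" using RM M_nonneg by (intro theta_nonneg) simp
    have Rt0: "Rt0 > 0" unfolding Rt0_def using tR theta_nonneg[OF M_nonneg] by simp
    have lim0: "(\<lambda>n. ln (real (Ntilde E \<tau> l ext Rt0 n)) / real n) \<longlonglongrightarrow> 0" using h Rt0 by blast
    have "(\<lambda>n. a n / real n) \<longlonglongrightarrow> 0"
    proof (rule tendsto_sandwich[OF _ _ tendsto_const lim0])
      show "\<forall>\<^sub>F n in sequentially. 0 \<le> a n / real n"
        using a0 by (intro always_eventually allI divide_nonneg_nonneg) simp_all
      have "a n / real n \<le> ln (real (Ntilde E \<tau> l ext Rt0 n)) / real n" for n
      proof -
        have "Ncount E \<tau> lam R n \<le> Ntilde E \<tau> l ext Rt0 n" by (rule part2[OF ve]) (simp add: Rt0_def)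
        then have "N n \<le> real (Ntilde E \<tau> l ext Rt0 n)" unfolding N_def by simp
        then have "a n \<le> ln (real (Ntilde E \<tau> l ext Rt0 n))" unfolding a_def using N1[of n] by simp
        then show ?thesis by (rule divide_right_mono) simp
      qed
      then show "\<forall>\<^sub>F n in sequentially. a n / real n \<le> ln (real (Ntilde E \<tau> l ext Rt0 n)) / real n"
        by (intro always_eventually allI)
    qed
    then have "L = 0" using La LIMSEQ_unique by blast
    then show "Ntau E \<tau> lam R = 1" using NtL by simp
  qed
qed

end

theorem mainTheorem8:
  fixes E \<tau> :: "real \<Rightarrow> real" and r l :: nat and lam Lam R :: real
    and ext :: "nat \<Rightarrow> (nat \<Rightarrow> nat) \<Rightarrow> (nat \<Rightarrow> nat)"
  assumes "r \<ge> 2" and "l \<ge> 2"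
    and "Cr r E" and "\<forall>x. E (x + 1) = E x + real l"
    and "1 < lam" and "\<forall>x. lam \<le> deriv E x \<and> deriv E x \<le> Lam"
    and "E 0 \<in> \<int>"
    and "Cr r \<tau>" and "\<forall>x. \<tau> (x + 1) = \<tau> x"
    and "R > supnorm_deriv \<tau>"
    and "valid_ext l ext"
  shows "(\<forall>Rt>0. theta lam R - theta lam (supnorm_deriv \<tau>) \<ge> Rt \<longrightarrow>
            (\<forall>n\<ge>1. Ntilde E \<tau> l ext Rt n \<le> Ncount E \<tau> lam R n))
       \<and> (\<forall>Rt. Rt > theta lam R + theta lam (supnorm_deriv \<tau>) \<longrightarrow>
            (\<forall>n\<ge>1. Ncount E \<tau> lam R n \<le> Ntilde E \<tau> l ext Rt n))
       \<and> (Ntau E \<tau> lam R = 1 \<longleftrightarrow>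
            (\<forall>Rt>0. (\<lambda>n. ln (real (Ntilde E \<tau> l ext Rt n)) / real n) \<longlonglongrightarrow> 0))"
proof -
  have r0: "0 < r" "1 < r" using assms(1) by auto
  have CE: "\<forall>k<r. \<forall>x. ((deriv ^^ k) E has_real_derivative (deriv ^^ Suc k) E x) (at x)"
    using assms(3) by (simp add: Cr_def)
  have Ct: "\<forall>k<r. \<forall>x. ((deriv ^^ k) \<tau> has_real_derivative (deriv ^^ Suc k) \<tau> x) (at x)"
    using assms(8) by (simp add: Cr_def)
  have Ed: "(E has_real_derivative deriv E x) (at x)" for x using CE r0(1) by force
  have td: "(\<tau> has_real_derivative deriv \<tau> x) (at x)" for x using Ct r0(1) by force
  have td2: "\<exists>D. (deriv \<tau> has_real_derivative D) (at x)" for x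
  proof -
    have "((deriv ^^ 1) \<tau> has_real_derivative (deriv ^^ Suc 1) \<tau> x) (at x)" using Ct r0(2) by blast
    then show ?thesis by auto
  qed
  have tdc: "continuous_on UNIV (deriv \<tau>)"
    using td2 by (meson DERIV_isCont continuous_at_imp_continuous_on)
  interpret skew E \<tau> l lam
    by unfold_locales (use assms Ed td tdc in auto)
  have Meq: "supnorm_deriv \<tau> = M" by (simp add: M_def)
  have RM: "M < R" using assms(10) Meq by simp
  show ?thesis unfolding Meq
  proof (intro conjI)
    show "\<forall>Rt>0. theta lam R - theta lam M \<ge> Rt \<longrightarrow> (\<forall>n\<ge>1. Ntilde E \<tau> l ext Rt n \<le> Ncount E \<tau> lam R n)"
    proof (intro allI impI)
      fix Rt :: real and n :: nat assume "Rt > 0" "theta lam R - theta lam M \<ge> Rt" "n \<ge> 1"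
      then show "Ntilde E \<tau> l ext Rt n \<le> Ncount E \<tau> lam R n" by (intro part1[OF assms(11)]) simp
    qed
    show "\<forall>Rt. Rt > theta lam R + theta lam M \<longrightarrow> (\<forall>n\<ge>1. Ncount E \<tau> lam R n \<le> Ntilde E \<tau> l ext Rt n)"
    proof (intro allI impI)
      fix Rt :: real and n :: nat assume "Rt > theta lam R + theta lam M" "n \<ge> 1"
      then show "Ncount E \<tau> lam R n \<le> Ntilde E \<tau> l ext Rt n" by (intro part2[OF assms(11)]) simp
    qed
    show "Ntau E \<tau> lam R = 1 \<longleftrightarrow> (\<forall>Rt>0. (\<lambda>n. ln (real (Ntilde E \<tau> l ext Rt n)) / real n) \<longlonglongrightarrow> 0)"
      by (rule third[OF assms(11) RM])
  qed
qed



end
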